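(* Suppose $m$, $n$ are positive integers. Then \[ \sum_{k = 1}^{m} (-1)^{k-1} \binom{m}{k} \frac{1}{k^{n}} = \frac{1}{n!} \sum_{\{A_{1},\dotsc,A_{j}\} \in \Pi(n)} a_{|A_{1}|} \cdots a_{|A_{j}|}, \] where $a_{i} = (i-1)!\, H^{(i)}_{m}$ for each positive integer $i$.
   Context: $\Pi(n)$ is the set of all set partitions of $\{1,\dots,n\}$ into nonempty blocks $A_1,\dots,A_j$ (with $j$ varying), and $|A|$ is the cardinality of $A$. $H^{(i)}_m=\sum_{k=1}^m k^{-i}$ is the generalized harmonic number. *)

theory Defs
  imports Complex_Main "HOL-Library.Disjoint_Sets"
begin

definition gen_harm :: "nat \<Rightarrow> nat \<Rightarrow> real" where
  "gen_harm i m = (\<Sum>k=1..m. 1 / (real k ^ i))"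

definition set_partitions :: "nat \<Rightarrow> nat set set set" where
  "set_partitions n = {P. partition_on {1..n} P}"

end

theory Submission imports Defs "HOL-Computational_Algebra.Formal_Power_Series" begin

definition G :: "nat \<Rightarrow> real fps" where "G i = Abs_fps (\<lambda>j. 1 / real i ^ j)"

fun H :: "nat \<Rightarrow> real fps" where
  "H 0 = 1" | "H (Suc m) = H m * G (Suc m)"

definition Pm :: "nat \<Rightarrow> real fps" where "Pm m = Abs_fps (\<lambda>j. gen_harm (j+1) m)"

lemma derivG: "fps_deriv (G i) = fps_const (1/real i) * G i * G i"
proof (rule fps_ext)
  fix n
  have "fps_nth (G i * G i) n = (\<Sum>k=0..n. 1 / real i ^ n)"
    unfolding fps_mult_nth G_def
    by (rule sum.cong) (auto simp: power_add[symmetric])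
  then show "fps_nth (fps_deriv (G i)) n = fps_nth (fps_const (1/real i) * G i * G i) n"
    by (simp add: mult.assoc G_def)
qed

lemma Pm_Suc: "Pm (Suc m) = Pm m + fps_const (1/real (Suc m)) * G (Suc m)"
  by (rule fps_ext) (simp add: Pm_def G_def gen_harm_def power_divide)

lemma Pm_0: "Pm 0 = 0"
  by (rule fps_ext) (simp add: Pm_def gen_harm_def)

lemma newton: "fps_deriv (H m) = Pm m * H m"
proof (induction m)
  case 0 then show ?case by (simp add: Pm_0)
next
  case (Suc m)
  show ?case by (simp add: Suc derivG Pm_Suc algebra_simps)
qed

lemma newton_nth: "real (Suc n) * fps_nth (H m) (Suc n) = (\<Sum>i=0..n. gen_harm (i+1) m * fps_nth (H m) (n - i))"
proof -
  have "fps_nth (fps_deriv (H m)) n = fps_nth (Pm m * H m) n" by (simp only: newton)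
  then show ?thesis by (simp add: fps_mult_nth Pm_def)
qed

lemma H_0: "fps_nth (H m) 0 = 1"
  by (induction m) (simp_all add: G_def)

lemma G_rec: "G i = 1 + fps_const (1/real i) * (fps_X * G i)"
proof (rule fps_ext)
  fix n show "fps_nth (G i) n = fps_nth (1 + fps_const (1/real i) * (fps_X * G i)) n"
    by (cases n) (simp_all add: G_def power_divide)
qed

lemma H_rec: "fps_nth (H (Suc m)) (Suc n) = fps_nth (H m) (Suc n) + fps_nth (H (Suc m)) n / real (Suc m)"
proof -
  have "H (Suc m) = H m * (1 + fps_const (1/real (Suc m)) * (fps_X * G (Suc m)))"
    unfolding H.simps by (rule arg_cong[where f="(*) (H m)"], rule G_rec)
  also have "\<dots> = H m + fps_const (1/real (Suc m)) * (fps_X * H (Suc m))"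
    by (simp add: algebra_simps)
  finally have "fps_nth (H (Suc m)) (Suc n) = fps_nth (H m + fps_const (1/real (Suc m)) * (fps_X * H (Suc m))) (Suc n)"
    by simp
  then show ?thesis by simp
qed

definition L :: "nat \<Rightarrow> nat \<Rightarrow> real" where
  "L m n = (\<Sum>k=1..m. (-1) ^ (k - 1) * real (m choose k) / real k ^ n)"

lemma L_rec: "L (Suc m) (Suc n) = L m (Suc n) + L (Suc m) n / real (Suc m)"
proof -
  have t: "(-1) ^ (k - 1) * real (Suc m choose k) / real k ^ Suc n
      = (-1) ^ (k - 1) * real (m choose k) / real k ^ Suc n
        + ((-1) ^ (k - 1) * real (Suc m choose k) / real k ^ n) / real (Suc m)"
    if k: "k \<in> {1..Suc m}" for k
  proof -
    obtain j where kj: "k = Suc j" using k by (cases k) auto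
    have c1: "real (Suc m choose Suc j) = real (m choose Suc j) + real (m choose j)" by simp
    have c2: "real (Suc j) * real (Suc m choose Suc j) = real (Suc m) * real (m choose j)"
      using Suc_times_binomial[of j m] by (metis of_nat_mult)
    have c3: "real (Suc m choose Suc j) / real (Suc m) = real (m choose j) / real (Suc j)"
      using c2 by (simp add: field_simps)
    have e: "((-1) ^ j * real (Suc m choose Suc j) / real (Suc j) ^ n) / real (Suc m)
        = (-1) ^ j * real (m choose j) / real (Suc j) ^ Suc n"
    proof -
      have "((-1) ^ j * real (Suc m choose Suc j) / real (Suc j) ^ n) / real (Suc m)
         = (-1) ^ j * (real (Suc m choose Suc j) / real (Suc m)) / real (Suc j) ^ n" by simp
      also have "\<dots> = (-1) ^ j * (real (m choose j) / real (Suc j)) / real (Suc j) ^ n"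
        by (simp only: c3)
      also have "\<dots> = (-1) ^ j * real (m choose j) / real (Suc j) ^ Suc n" by simp
      finally show ?thesis .
    qed
    show ?thesis unfolding kj diff_Suc_1 e unfolding c1
      by (simp add: algebra_simps add_divide_distrib)
  qed
  have "L (Suc m) (Suc n) = (\<Sum>k=1..Suc m. (-1) ^ (k - 1) * real (m choose k) / real k ^ Suc n
        + ((-1) ^ (k - 1) * real (Suc m choose k) / real k ^ n) / real (Suc m))"
    unfolding L_def by (rule sum.cong[OF refl t])
  also have "\<dots> = (\<Sum>k=1..Suc m. (-1) ^ (k - 1) * real (m choose k) / real k ^ Suc n)
        + L (Suc m) n / real (Suc m)"
    by (simp only: sum.distrib sum_divide_distrib L_def)
  also have "(\<Sum>k=1..Suc m. (-1) ^ (k - 1) * real (m choose k) / real k ^ Suc n) = L m (Suc n)"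
    unfolding L_def by (simp add: sum.cl_ivl_Suc)
  finally show ?thesis .
qed

lemma L_0: "m > 0 \<Longrightarrow> L m 0 = 1"
proof -
  assume m: "m > 0"
  have "(\<Sum>i\<le>m. (-1)^i * real (m choose i)) = 0" using choose_alternating_sum[OF m] by simp
  also have "(\<Sum>i\<le>m. (-1)^i * real (m choose i)) = 1 + (\<Sum>i=1..m. (-1)^i * real (m choose i))"
    by (simp add: atMost_atLeast0 sum.atLeast_Suc_atMost)
  finally have s: "(\<Sum>i=1..m. (-1)^i * real (m choose i)) = -1" by simp
  have "L m 0 = (\<Sum>i=1..m. - ((-1)^i * real (m choose i)))"
    unfolding L_def by (rule sum.cong) (auto simp: power_eq_if)
  also have "\<dots> = 1" using s by (simp add: sum_negf)
  finally show ?thesis .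
qed

lemma L_H: "m > 0 \<or> n > 0 \<Longrightarrow> L m n = fps_nth (H m) n"
proof (induction m arbitrary: n)
  case 0
  then show ?case by (simp add: L_def)
next
  case (Suc m)
  note outer = Suc.IH
  show ?case
  proof (induction n)
    case 0 then show ?case by (simp add: L_0 H_0 del: H.simps)
  next
    case (Suc n)
    then show ?case using outer[of "Suc n"] by (simp add: L_rec H_rec del: H.simps)
  qed
qed

definition parts :: "'a set \<Rightarrow> 'a set set set" where
  "parts S = {P. partition_on S P}"

definition T :: "(nat \<Rightarrow> real) \<Rightarrow> 'a set \<Rightarrow> real" where
  "T a S = (\<Sum>P\<in>parts S. \<Prod>A\<in>P. a (card A))"

lemma parts_bij:
  assumes fin: "finite S" and x: "x \<notin> S"
  shows "bij_betw (\<lambda>(B,Q). insert (insert x B) Q) (SIGMA B:Pow S. parts (S - B)) (parts (insert x S))"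
proof -
  have key: "partition_on (insert x S) (insert (insert x B) Q) \<longleftrightarrow> partition_on (S - B) Q"
    if "B \<subseteq> S" "x \<notin> \<Union>Q" "\<Union>Q \<subseteq> S - B" for B Q
  proof -
    have d: "disjnt (insert x B) (\<Union>Q)" using that by (auto simp: disjnt_def)
    have e: "insert x S - insert x B = S - B" using x by auto
    show ?thesis using partition_on_insert[OF d, of "insert x S"] e that by auto
  qed
  show ?thesis
    unfolding bij_betw_def
  proof
    show "inj_on (\<lambda>(B,Q). insert (insert x B) Q) (SIGMA B:Pow S. parts (S - B))"
    proof (rule inj_onI)
      fix p p'
      assume pin: "p \<in> (SIGMA B:Pow S. parts (S - B))" and p'in: "p' \<in> (SIGMA B:Pow S. parts (S - B))"
        and eq0: "(\<lambda>(B,Q). insert (insert x B) Q) p = (\<lambda>(B,Q). insert (insert x B) Q) p'"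
      obtain B Q where pp: "p = (B, Q)" by (cases p)
      obtain B' Q' where pp': "p' = (B', Q')" by (cases p')
      have B: "B \<in> Pow S" and Q: "Q \<in> parts (S - B)" using pin pp by auto
      have B': "B' \<in> Pow S" and Q': "Q' \<in> parts (S - B')" using p'in pp' by auto
      have eq: "insert (insert x B) Q = insert (insert x B') Q'" using eq0 pp pp' by simp
      have uQ: "\<Union>Q = S - B" using Q by (metis mem_Collect_eq parts_def partition_onD1)
      have uQ': "\<Union>Q' = S - B'" using Q' by (metis mem_Collect_eq parts_def partition_onD1)
      have n1: "insert x B \<notin> Q" using uQ x by auto
      have n2: "insert x B' \<notin> Q'" using uQ' x by auto
      have n3: "insert x B \<notin> Q'" using uQ' x by auto
      have "insert x B \<in> insert (insert x B') Q'" using eq by auto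
      then have ib: "insert x B = insert x B'" using n3 by auto
      then have "B = B'" using B B' x by (auto simp: insert_ident)
      moreover have "Q = Q'" using eq ib n1 n2 by (metis insert_ident)
      ultimately show "p = p'" using pp pp' by simp
    qed
  next
    show "(\<lambda>(B,Q). insert (insert x B) Q) ` (SIGMA B:Pow S. parts (S - B)) = parts (insert x S)"
    proof
      show "(\<lambda>(B,Q). insert (insert x B) Q) ` (SIGMA B:Pow S. parts (S - B)) \<subseteq> parts (insert x S)"
      proof (rule subsetI)
        fix y assume "y \<in> (\<lambda>(B,Q). insert (insert x B) Q) ` (SIGMA B:Pow S. parts (S - B))"
        then obtain B Q where B: "B \<in> Pow S" and Q: "Q \<in> parts (S - B)"
          and y: "y = insert (insert x B) Q" by auto
        have uQ: "\<Union>Q = S - B" using Q by (metis mem_Collect_eq parts_def partition_onD1)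
        then show "y \<in> parts (insert x S)"
          using key[of B Q] B Q x y by (auto simp: parts_def)
      qed
    next
      show "parts (insert x S) \<subseteq> (\<lambda>(B,Q). insert (insert x B) Q) ` (SIGMA B:Pow S. parts (S - B))"
      proof
        fix P assume "P \<in> parts (insert x S)"
        then have P: "partition_on (insert x S) P" by (simp add: parts_def)
        have "x \<in> \<Union>P" using partition_onD1[OF P] by auto
        then obtain p where p: "p \<in> P" "x \<in> p" by auto
        define B where "B = p - {x}"
        define Q where "Q = P - {p}"
        have pB: "p = insert x B" using p B_def by auto
        have PQ: "P = insert p Q" using p Q_def by auto
        have pS: "p \<subseteq> insert x S" using partition_onD1[OF P] p by auto
        have BS: "B \<subseteq> S" using pS B_def by auto
        have disj: "disjnt p (\<Union>Q)"
        proof -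
          have "\<And>q. q \<in> Q \<Longrightarrow> disjnt p q"
            using partition_onD2[OF P] p Q_def by (auto simp: disjoint_def disjnt_def)
          then show ?thesis by (auto simp: disjnt_def)
        qed
        have "partition_on (insert x S - p) Q"
          using partition_on_insert[OF disj, of "insert x S"] P PQ by simp
        moreover have "insert x S - p = S - B" using pB x by auto
        ultimately have "Q \<in> parts (S - B)" by (simp add: parts_def)
        then show "P \<in> (\<lambda>(B,Q). insert (insert x B) Q) ` (SIGMA B:Pow S. parts (S - B))"
          using BS PQ pB by (auto intro!: image_eqI[where x="(B,Q)"])
      qed
    qed
  qed
qed

lemma finite_parts: "finite S \<Longrightarrow> finite (parts S)"
  by (simp add: parts_def finitely_many_partition_on)

lemma prod_block:
  assumes fin: "finite S" and x: "x \<notin> S" and B: "B \<in> Pow S" and Q: "Q \<in> parts (S - B)"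
  shows "(\<Prod>A\<in>insert (insert x B) Q. a (card A)) = a (Suc (card B)) * (\<Prod>A\<in>Q. a (card A))"
proof -
    have uQ: "\<Union>Q = S - B" using Q by (metis mem_Collect_eq parts_def partition_onD1)
    have fQ: "finite Q" using uQ fin by (metis finite_Diff finite_UnionD)
    have n1: "insert x B \<notin> Q" using uQ x by auto
    have fB: "finite B" using B fin finite_subset by auto
    have xB: "x \<notin> B" using B x by auto
    show ?thesis
      using fQ n1 fB xB by simp
qed

lemma T_insert:
  assumes fin: "finite S" and x: "x \<notin> S"
  shows "T a (insert x S) = (\<Sum>B\<in>Pow S. a (Suc (card B)) * T a (S - B))"
proof -
  have "T a (insert x S) = (\<Sum>p\<in>(SIGMA B:Pow S. parts (S - B)).
          (\<lambda>P. \<Prod>A\<in>P. a (card A)) ((\<lambda>(B,Q). insert (insert x B) Q) p))"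
    unfolding T_def by (rule sum.reindex_bij_betw[OF parts_bij[OF fin x], symmetric])
  also have "\<dots> = (\<Sum>(B,Q)\<in>(SIGMA B:Pow S. parts (S - B)). a (Suc (card B)) * (\<Prod>A\<in>Q. a (card A)))"
    by (rule sum.cong[OF refl]) (auto simp: prod_block[OF fin x])
  also have "\<dots> = (\<Sum>B\<in>Pow S. \<Sum>Q\<in>parts (S - B). a (Suc (card B)) * (\<Prod>A\<in>Q. a (card A)))"
    by (rule sum.Sigma[symmetric]) (auto simp: fin finite_parts)
  also have "\<dots> = (\<Sum>B\<in>Pow S. a (Suc (card B)) * T a (S - B))"
    by (simp add: T_def sum_distrib_left)
  finally show ?thesis .
qed

lemma T_empty: "T a {} = 1"
  by (simp add: T_def parts_def partition_on_empty)

lemma sum_pow_card: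
  assumes "finite S"
  shows "(\<Sum>B\<in>Pow S. f (card B)) = (\<Sum>j=0..card S. real (card S choose j) * f j)"
proof -
  have "(\<Sum>B\<in>Pow S. f (card B)) = (\<Sum>j\<in>{0..card S}. \<Sum>B\<in>{B. B \<in> Pow S \<and> card B = j}. f (card B))"
    by (rule sum.group[symmetric]) (auto simp: assms card_mono)
  also have "\<dots> = (\<Sum>j=0..card S. real (card S choose j) * f j)"
  proof (rule sum.cong[OF refl])
    fix j
    have "(\<Sum>B\<in>{B. B \<in> Pow S \<and> card B = j}. f (card B)) = (\<Sum>B\<in>{B. B \<subseteq> S \<and> card B = j}. f j)"
      by (rule sum.cong) auto
    also have "\<dots> = real (card S choose j) * f j" using n_subsets[OF assms, of j] by simp
    finally show "(\<Sum>B\<in>{B. B \<in> Pow S \<and> card B = j}. f (card B)) = real (card S choose j) * f j" .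
  qed
  finally show ?thesis .
qed

lemma T_main:
  fixes m :: nat
  shows "finite S \<Longrightarrow> T (\<lambda>i. fact (i - 1) * gen_harm i m) S = fact (card S) * fps_nth (H m) (card S)"
proof (induction "card S" arbitrary: S rule: less_induct)
  case less
  define a where "a = (\<lambda>i. fact (i - 1) * gen_harm i m :: real)"
  define h where "h = (\<lambda>n. fps_nth (H m) n)"
  show ?case
  proof (cases "S = {}")
    case True
    then show ?thesis by (simp add: T_empty H_0 del: H.simps)
  next
    case False
    then obtain x where xS: "x \<in> S" by auto
    define S' where "S' = S - {x}"
    define n' where "n' = card S'"
    have fS': "finite S'" using less.prems S'_def by simp
    have SS: "S = insert x S'" using xS S'_def by auto
    have xS': "x \<notin> S'" using S'_def by simp
    have cS: "card S = Suc n'" using SS xS' fS' n'_def by simp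
    have "T a S = (\<Sum>B\<in>Pow S'. a (Suc (card B)) * T a (S' - B))"
      using T_insert[OF fS' xS'] SS by simp
    also have "\<dots> = (\<Sum>B\<in>Pow S'. a (Suc (card B)) * (fact (n' - card B) * h (n' - card B)))"
    proof (rule sum.cong[OF refl])
      fix B assume B: "B \<in> Pow S'"
      have fB: "finite B" using B fS' finite_subset by auto
      have cB: "card (S' - B) = n' - card B" using B fB n'_def by (simp add: card_Diff_subset)
      have "card (S' - B) < card S" using cB cS by simp
      then have "T a (S' - B) = fact (card (S' - B)) * h (card (S' - B))"
        using less.hyps[of "S' - B"] fS' a_def h_def by simp
      then show "a (Suc (card B)) * T a (S' - B) = a (Suc (card B)) * (fact (n' - card B) * h (n' - card B))"
        using cB by simp
    qed
    also have "\<dots> = (\<Sum>j=0..n'. real (n' choose j) * (a (Suc j) * (fact (n' - j) * h (n' - j))))"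
      using sum_pow_card[OF fS', of "\<lambda>j. a (Suc j) * (fact (n' - j) * h (n' - j))"] n'_def by simp
    also have "\<dots> = (\<Sum>j=0..n'. fact n' * (gen_harm (j+1) m * h (n' - j)))"
    proof (rule sum.cong[OF refl])
      fix j assume "j \<in> {0..n'}"
      then have jn: "j \<le> n'" by simp
      have "real (n' choose j) * (fact j * fact (n' - j)) = fact n'"
        using binomial_fact[OF jn, where 'a=real] by (simp add: field_simps)
      then show "real (n' choose j) * (a (Suc j) * (fact (n' - j) * h (n' - j))) = fact n' * (gen_harm (j+1) m * h (n' - j))"
        unfolding a_def by (simp add: algebra_simps)
    qed
    also have "\<dots> = fact n' * (real (Suc n') * h (Suc n'))"
      by (simp add: sum_distrib_left[symmetric] newton_nth h_def del: H.simps of_nat_Suc)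
    also have "\<dots> = fact (card S) * h (card S)"
      using cS by (simp add: algebra_simps del: H.simps)
    finally show ?thesis using a_def h_def by simp
  qed
qed

theorem theorem3:
  fixes m n :: nat
  assumes "m > 0" and "n > 0"
  shows "(\<Sum>k=1..m. (-1) ^ (k - 1) * real (m choose k) / real k ^ n)
       = (1 / fact n) * (\<Sum>P\<in>set_partitions n.
            \<Prod>A\<in>P. fact (card A - 1) * gen_harm (card A) m)"
proof -
  have l: "(\<Sum>k=1..m. (-1) ^ (k - 1) * real (m choose k) / real k ^ n) = fps_nth (H m) n"
    using L_H[of m n] assms by (simp add: L_def)
  have r: "(\<Sum>P\<in>set_partitions n. \<Prod>A\<in>P. fact (card A - 1) * gen_harm (card A) m)
      = T (\<lambda>i. fact (i - 1) * gen_harm i m) {1..n}"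
    by (simp add: T_def set_partitions_def parts_def)
  show ?thesis unfolding l r using T_main[of "{1..n}" m] by simp
qed

end
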